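(* Let $t,w,x,y,z\in \mathbb{Z}^+$, let $r=0.8$ and $c=1/(8^r-6^r)\approx 0.922$. Then: (i) If $x\geq 8.956z$ and $y\geq 1.036z$ then $x^r+y^r\geq (x+y+z)^r$. (ii) If $x\leq 10.174y$ then $cx^r+y^r\geq(x+y)^r$. (iii) If $0.5y\leq x\leq 8.884y$ then $x^r+y^r\geq (1+1/10.174)^r(x+y)^r$. (iv) If $z<1.98(t+w+x+y)$ and $0<t\leq2.072\cdot\min\{w/1.036, x,y,z/5.884\}$ then $w^r+x^r+y^r+cz^r\geq(t+w+x+y+z)^r$. (v) If $w\leq \min\{x,y,z\}$ then $cx^r+y^r+z^r\geq c(w+x+y+z)^r$. (vi) If $x\geq 6z$ and $y\geq z$ then $cx^r+y^r\geq c(x+y+z)^r$.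
   Context: $\mathbb{Z}^+$ denotes the set of non-negative integers. *)

theory Defs
  imports Complex_Main
begin

definition rr :: real where "rr = 0.8"

definition cc :: real where "cc = 1 / (8 powr rr - 6 powr rr)"

end

theory Submission
  imports Defs
begin


lemma rr_pow5: "0 \<le> a \<Longrightarrow> (a powr rr)^5 = (a::real)^4"
proof (cases "a = 0")
  case True then show ?thesis by (simp add: rr_def)
next
  case False
  assume "0 \<le> a"
  then have "a > 0" using False by simp
  have "(a powr rr)^5 = a powr (rr * 5)"
    by (metis \<open>0 < a\<close> of_nat_numeral powr_gt_zero powr_powr powr_realpow)
  also have "rr * 5 = real 4" by (simp add: rr_def)
  also have "a powr real 4 = a^4" using \<open>a>0\<close> by (rule powr_realpow)
  finally show ?thesis .
qed

lemma pow_lb: "0 \<le> a \<Longrightarrow> p^5 \<le> (a::real)^4 \<Longrightarrow> p \<le> a powr rr"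
  by (rule power_le_imp_le_base[where n=4]) (simp_all add: rr_pow5)

lemma pow_ub: "0 \<le> a \<Longrightarrow> 0 \<le> q \<Longrightarrow> (a::real)^4 \<le> q^5 \<Longrightarrow> a powr rr \<le> q"
  by (rule power_le_imp_le_base[where n=4]) (simp_all add: rr_pow5)



lemma sign_lemma:
  fixes A B v w :: real
  assumes "A > 0" "B > 0" "v > 0" "w > 0" "B^5 * v \<le> A^5 * w"
  shows "B * w powr (rr-1) \<le> A * v powr (rr - 1)"
proof (rule power_le_imp_le_base[where n=4])
  have e: "\<And>v::real. v > 0 \<Longrightarrow> (v powr (rr-1))^5 = 1/v"
  proof -
    fix v :: real assume "v > 0"
    have "(v powr (rr-1))^5 = v powr ((rr-1)*5)"
      by (metis \<open>0 < v\<close> of_nat_numeral powr_gt_zero powr_powr powr_realpow)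
    also have "(rr-1)*5 = -1" by (simp add: rr_def)
    finally show "(v powr (rr-1))^5 = 1/v" using \<open>v>0\<close> by (simp add: powr_minus divide_inverse)
  qed
  have "(B * w powr (rr-1))^Suc 4 = B^5 / w"
    using e[of w] assms by (simp add: power_mult_distrib)
  also have "\<dots> \<le> A^5 / v" using assms
    by (simp add: divide_simps mult.commute)
  also have "A^5/v = (A * v powr (rr-1))^Suc 4"
    using e[of v] assms by (simp add: power_mult_distrib)
  finally show "(B * w powr (rr-1))^Suc 4 \<le> (A * v powr (rr-1))^Suc 4" .
  show "0 \<le> A * v powr (rr-1)" using assms by simp
qed

lemma G_deriv:
  fixes a d S u :: real
  assumes "u > 0" "S \<ge> 0"
  shows "((\<lambda>u. a * u powr rr - d * (u+S) powr rr) has_real_derivative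
          rr * (a * u powr (rr-1) - d * (u+S) powr (rr-1))) (at u)"
  using assms
  by (auto intro!: derivative_eq_intros simp: algebra_simps)

lemma G_cont:
  fixes a d S :: real
  assumes "p \<ge> 0" "S \<ge> 0"
  shows "continuous_on {p..q} (\<lambda>u. a * u powr rr - d * (u+S) powr rr)"
  using assms
  by (auto intro!: continuous_intros continuous_on_powr' simp: rr_def)

lemma mono_G:
  fixes a d S p q :: real
  assumes "a > 0" "d > 0" "S \<ge> 0" "0 \<le> p" "p \<le> q"
    and h: "\<And>u. p < u \<Longrightarrow> u < q \<Longrightarrow> d^5 * u \<le> a^5 * (u+S)"
  shows "a * p powr rr - d * (p+S) powr rr \<le> a * q powr rr - d * (q+S) powr rr"
proof (rule DERIV_nonneg_imp_increasing_open[OF \<open>p \<le> q\<close>])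
  fix u assume u: "p < u" "u < q"
  have "d * (u+S) powr (rr-1) \<le> a * u powr (rr - 1)"
    using sign_lemma[of a d u "u+S"] assms u h[OF u] by simp
  then show "\<exists>y. ((\<lambda>u. a * u powr rr - d * (u+S) powr rr) has_real_derivative y) (at u) \<and> 0 \<le> y"
    using G_deriv[of u S a d] u assms by (intro exI[of _ "rr * (a * u powr (rr-1) - d * (u+S) powr (rr-1))"]) (simp add: rr_def)
qed (rule G_cont; use assms in auto)

lemma anti_G:
  fixes a d S p q :: real
  assumes "a > 0" "d > 0" "S \<ge> 0" "0 \<le> p" "p \<le> q"
    and h: "\<And>u. p < u \<Longrightarrow> u < q \<Longrightarrow> a^5 * (u+S) \<le> d^5 * u"
  shows "a * q powr rr - d * (q+S) powr rr \<le> a * p powr rr - d * (p+S) powr rr"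
proof (rule DERIV_nonpos_imp_decreasing_open[OF \<open>p \<le> q\<close>])
  fix u assume u: "p < u" "u < q"
  have "a * u powr (rr-1) \<le> d * (u+S) powr (rr - 1)"
    using sign_lemma[of d a "u+S" u] assms u h[OF u] by simp
  then show "\<exists>y. ((\<lambda>u. a * u powr rr - d * (u+S) powr rr) has_real_derivative y) (at u) \<and> y \<le> 0"
    using G_deriv[of u S a d] u assms by (intro exI[of _ "rr * (a * u powr (rr-1) - d * (u+S) powr (rr-1))"]) (simp add: rr_def)
qed (rule G_cont; use assms in auto)

lemma incr:
  fixes K p q :: real
  assumes "K \<ge> 0" "0 \<le> p" "p \<le> q"
  shows "(q+K) powr rr - q powr rr \<le> (p+K) powr rr - p powr rr"
  using mono_G[of 1 1 K p q] assms by simp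


lemma pm: "0 \<le> k \<Longrightarrow> 0 \<le> t \<Longrightarrow> (k * t) powr rr = k powr rr * (t::real) powr rr"
  by (simp add: powr_mult)

lemma b8l: "5.278031643 \<le> (8::real) powr rr" by (rule pow_lb) (simp_all add: power_divide)
lemma b8u: "(8::real) powr rr \<le> 5.278031644" by (rule pow_ub) (simp_all add: power_divide)
lemma b6l: "4.192962712 \<le> (6::real) powr rr" by (rule pow_lb) (simp_all add: power_divide)
lemma b6u: "(6::real) powr rr \<le> 4.192962713" by (rule pow_ub) (simp_all add: power_divide)

lemma c_lo: "0.921600435 \<le> cc"
proof -
  have "8 powr rr - 6 powr rr \<le> (1.085068932::real)" using b8u b6l by simp
  moreover have "(0::real) < 8 powr rr - 6 powr rr" using b8l b6u by simp
  ultimately show ?thesis unfolding cc_def by (simp add: le_divide_eq)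
qed

lemma c_hi: "cc \<le> 0.921600437"
proof -
  have "(1.085068930::real) \<le> 8 powr rr - 6 powr rr" using b8l b6u by simp
  then show ?thesis unfolding cc_def by (simp add: divide_le_eq)
qed

lemma c_pos: "0 < cc" using c_lo by simp
lemma c_le1: "cc \<le> 1" using c_hi by simp

lemma c_id: "cc * 8 powr rr - cc * 6 powr rr = 1"
proof -
  have "(0::real) < 8 powr rr - 6 powr rr" using b8l b6u by simp
  then show ?thesis unfolding cc_def by (simp add: diff_divide_distrib[symmetric] right_diff_distrib[symmetric])
qed

lemma unimodal:
  fixes a d S p q s :: real
  assumes "a > 0" "d > 0" "S \<ge> 0" "0 \<le> p" "p \<le> s" "s \<le> q" "a \<le> d"
  shows "min (a * p powr rr - d * (p+S) powr rr) (a * q powr rr - d * (q+S) powr rr)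
        \<le> a * s powr rr - d * (s+S) powr rr"
proof -
  have dd: "0 \<le> d^5 - a^5" using assms power_mono[of a d 5] by simp
  show ?thesis
  proof (cases "(d^5 - a^5) * s \<le> a^5 * S")
    case True
    have "a * p powr rr - d * (p+S) powr rr \<le> a * s powr rr - d * (s+S) powr rr"
    proof (rule mono_G)
      fix u assume "p < u" "u < s"
      then have "(d^5 - a^5) * u \<le> (d^5 - a^5) * s" using dd by (intro mult_left_mono) auto
      then show "d ^ 5 * u \<le> a ^ 5 * (u + S)" using True by (simp add: algebra_simps)
    qed (use assms in auto)
    then show ?thesis by simp
  next
    case False
    have "a * q powr rr - d * (q+S) powr rr \<le> a * s powr rr - d * (s+S) powr rr"
    proof (rule anti_G)
      fix u assume "s < u" "u < q"
      then have "(d^5 - a^5) * s \<le> (d^5 - a^5) * u" using dd by (intro mult_left_mono) auto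
      then show "a ^ 5 * (u + S) \<le> d ^ 5 * u" using False by (simp add: algebra_simps)
    qed (use assms in auto)
    then show ?thesis by simp
  qed
qed

lemma part1:
  fixes x y z :: real
  assumes "0 \<le> z" "x \<ge> 8.956 * z" "y \<ge> 1.036 * z"
  shows "x powr rr + y powr rr \<ge> (x + y + z) powr rr"
proof -
  define X where "X = 8.956 * z"
  define Y where "Y = 1.036 * z"
  have X0: "0 \<le> X" "0 \<le> Y" using assms by (auto simp: X_def Y_def)
  have h1: "(x + (y+z)) powr rr - x powr rr \<le> (X + (y+z)) powr rr - X powr rr"
    by (rule incr) (use assms X0 in \<open>auto simp: X_def\<close>)
  have h2: "(y + (X+z)) powr rr - y powr rr \<le> (Y + (X+z)) powr rr - Y powr rr"
    by (rule incr) (use assms X0 in \<open>auto simp: Y_def\<close>)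
  have "(Y + (X+z)) = 10.992 * z" by (simp add: X_def Y_def)
  then have "(Y + (X+z)) powr rr = (10.992 * z) powr rr" by (simp only:)
  then have e3: "(Y + (X+z)) powr rr = 10.992 powr rr * z powr rr" using assms pm[of "10.992" z] by simp
  have eX: "X powr rr = 8.956 powr rr * z powr rr" unfolding X_def by (rule pm) (use assms in auto)
  have eY: "Y powr rr = 1.036 powr rr * z powr rr" unfolding Y_def by (rule pm) (use assms in auto)
  have n1: "5.7768523 \<le> (8.956::real) powr rr" by (rule pow_lb) (simp_all add: power_divide)
  have n2: "1.0286977 \<le> (1.036::real) powr rr" by (rule pow_lb) (simp_all add: power_divide)
  have n3: "(10.992::real) powr rr \<le> 6.8055210" by (rule pow_ub) (simp_all add: power_divide)
  have zz: "0 \<le> z powr rr" by simp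
  have "10.992 powr rr * z powr rr \<le> (8.956 powr rr + 1.036 powr rr) * z powr rr"
    by (rule mult_right_mono) (use n1 n2 n3 zz in auto)
  then have "(Y + (X+z)) powr rr \<le> X powr rr + Y powr rr" using e3 eX eY by (simp add: algebra_simps)
  moreover have "(X + (y + z)) powr rr = (y + (X + z)) powr rr" by (simp add: ac_simps)
  ultimately have "(x + (y + z)) powr rr \<le> x powr rr + y powr rr" using h1 h2 by linarith
  then show ?thesis by (simp add: add.assoc)
qed


lemma part2:
  fixes x y :: real
  assumes "0 \<le> x" "0 \<le> y" "x \<le> 10.174 * y"
  shows "cc * x powr rr + y powr rr \<ge> (x + y) powr rr"
proof (cases "y = 0")
  case True
  then have "x = 0" using assms by simp
  then show ?thesis using True by simp
next
  case False
  then have yp: "y > 0" using assms by simp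
  define s where "s = x / y"
  have s0: "0 \<le> s" "s \<le> 10.174" using assms yp by (auto simp: s_def divide_simps)
  have xs: "x = s * y" using yp by (simp add: s_def)
  have u: "min (cc * 0 powr rr - 1 * (0+1) powr rr) (cc * 10.174 powr rr - 1 * (10.174+1) powr rr)
        \<le> cc * s powr rr - 1 * (s+1) powr rr"
    by (rule unimodal) (use s0 c_pos c_le1 in auto)
  have n1: "6.3972509 \<le> (10.174::real) powr rr" by (rule pow_lb) (simp_all add: power_divide)
  have n2: "(11.174::real) powr rr \<le> 6.8955186" by (rule pow_ub) (simp_all add: power_divide)
  have "0.921600435 * 6.3972509 \<le> cc * (10.174::real) powr rr"
    using c_lo n1 by (intro mult_mono) auto
  then have "-1 \<le> cc * 10.174 powr rr - 1 * (10.174+1) powr rr" using n2 by simp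
  then have key: "-1 \<le> cc * s powr rr - (s+1) powr rr" using u by (simp add: rr_def)
  have e1: "x powr rr = s powr rr * y powr rr" using xs s0 assms pm by simp
  have "x + y = (s+1) * y" using xs by (simp add: algebra_simps)
  then have e2: "(x + y) powr rr = (s+1) powr rr * y powr rr" using s0 assms pm[of "s+1" y] by simp
  have "-1 * y powr rr \<le> (cc * s powr rr - (s+1) powr rr) * y powr rr"
    by (rule mult_right_mono) (use key in auto)
  then show ?thesis using e1 e2 by (simp add: algebra_simps)
qed

lemma part3:
  fixes x y :: real
  assumes "0 \<le> x" "0 \<le> y" "0.5 * y \<le> x" "x \<le> 8.884 * y"
  shows "x powr rr + y powr rr \<ge> (1 + 1 / 10.174) powr rr * (x + y) powr rr"
proof (cases "y = 0")
  case True
  then have "x = 0" using assms by simp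
  then show ?thesis using True by simp
next
  case False
  then have yp: "y > 0" using assms by simp
  define s where "s = x / y"
  define A where "A = (1 + 1 / 10.174) powr rr"
  have A1: "1 \<le> A" unfolding A_def by (rule ge_one_powr_ge_zero) (auto simp: rr_def)
  have s0: "0.5 \<le> s" "s \<le> 8.884" using assms yp by (auto simp: s_def divide_simps)
  have xs: "x = s * y" using yp by (simp add: s_def)
  have u: "min (1 * 0.5 powr rr - A * (0.5+1) powr rr) (1 * 8.884 powr rr - A * (8.884+1) powr rr)
        \<le> 1 * s powr rr - A * (s+1) powr rr"
    by (rule unimodal) (use s0 A1 in auto)
  have n1: "5.7396688 \<le> (8.884::real) powr rr" by (rule pow_lb) (simp_all add: power_divide)
  have n2: "((1 + 1 / 10.174) * 9.884::real) powr rr \<le> 6.7378252" by (rule pow_ub) (simp_all add: power_divide)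
  have n3: "0.5743491 \<le> (0.5::real) powr rr" by (rule pow_lb) (simp_all add: power_divide)
  have n4: "((1 + 1 / 10.174) * 1.5::real) powr rr \<le> 1.4908933" by (rule pow_ub) (simp_all add: power_divide)
  have "A * (8.884+1) powr rr = ((1 + 1 / 10.174) * 9.884::real) powr rr"
    unfolding A_def by (subst pm) auto
  moreover have "A * (0.5+1) powr rr = ((1 + 1 / 10.174) * 1.5::real) powr rr"
    unfolding A_def by (subst pm) auto
  ultimately have key: "-1 \<le> s powr rr - A * (s+1) powr rr" using u n1 n2 n3 n4 by simp
  have e1: "x powr rr = s powr rr * y powr rr" using xs s0 assms pm by simp
  have "x + y = (s+1) * y" using xs by (simp add: algebra_simps)
  then have e2: "(x + y) powr rr = (s+1) powr rr * y powr rr" using s0 assms pm[of "s+1" y] by simp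
  have "-1 * y powr rr \<le> (s powr rr - A * (s+1) powr rr) * y powr rr"
    by (rule mult_right_mono) (use key in auto)
  then show ?thesis using e1 e2 by (simp add: algebra_simps A_def)
qed


lemma part6:
  fixes x y z :: real
  assumes "0 \<le> z" "x \<ge> 6 * z" "y \<ge> z"
  shows "cc * x powr rr + y powr rr \<ge> cc * (x + y + z) powr rr"
proof -
  have h1: "(x + (y+z)) powr rr - x powr rr \<le> (6*z + (y+z)) powr rr - (6*z) powr rr"
    by (rule incr) (use assms in auto)
  have h2: "(y + 7*z) powr rr - y powr rr \<le> (z + 7*z) powr rr - z powr rr"
    by (rule incr) (use assms in auto)
  have e1: "(6*z + (y+z)) powr rr = (y + 7*z) powr rr" by (simp add: algebra_simps)
  have e2: "(z + 7*z) powr rr = (8*z) powr rr" by (simp add: algebra_simps)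
  have m: "(8*z) powr rr \<le> (y + 7*z) powr rr" by (rule powr_mono2) (use assms in \<open>auto simp: rr_def\<close>)
  have "cc * ((y + 7*z) powr rr - (8*z) powr rr) \<le> 1 * ((y + 7*z) powr rr - (8*z) powr rr)"
    by (rule mult_right_mono) (use m c_le1 in auto)
  moreover have "cc * (8*z) powr rr - cc * (6*z) powr rr = z powr rr"
  proof -
    have "cc * (8*z) powr rr - cc * (6*z) powr rr = (cc * 8 powr rr - cc * 6 powr rr) * z powr rr"
      using assms by (simp add: pm algebra_simps)
    then show ?thesis using c_id by simp
  qed
  moreover have "cc * ((x + (y+z)) powr rr - x powr rr) \<le> cc * ((6*z + (y+z)) powr rr - (6*z) powr rr)"
    using h1 c_pos by (intro mult_left_mono) auto
  ultimately have "cc * (x + (y+z)) powr rr \<le> cc * x powr rr + y powr rr"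
    using h2 e1 e2 by (simp add: algebra_simps)
  then show ?thesis by (simp add: add.assoc)
qed

lemma part5:
  fixes w x y z :: real
  assumes "0 \<le> w" "w \<le> x" "w \<le> y" "w \<le> z"
  shows "cc * x powr rr + y powr rr + z powr rr \<ge> cc * (w + x + y + z) powr rr"
proof -
  have h1: "(x + (w+y+z)) powr rr - x powr rr \<le> (w + (w+y+z)) powr rr - w powr rr"
    by (rule incr) (use assms in auto)
  have h2: "(y + (2*w+z)) powr rr - y powr rr \<le> (w + (2*w+z)) powr rr - w powr rr"
    by (rule incr) (use assms in auto)
  have h3: "(z + 3*w) powr rr - z powr rr \<le> (w + 3*w) powr rr - w powr rr"
    by (rule incr) (use assms in auto)
  have e1: "(w + (w+y+z)) powr rr = (y + (2*w+z)) powr rr" by (simp add: algebra_simps)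
  have e2: "(w + (2*w+z)) powr rr = (z + 3*w) powr rr" by (simp add: algebra_simps)
  have e3: "(w + 3*w) powr rr = (4*w) powr rr" by (simp add: algebra_simps)
  have e4: "(x + (w+y+z)) powr rr = (w + x + y + z) powr rr" by (simp add: algebra_simps)
  have m: "(4*w) powr rr \<le> (y + (2*w+z)) powr rr" by (rule powr_mono2) (use assms in \<open>auto simp: rr_def\<close>)
  have "cc * ((y + (2*w+z)) powr rr - (4*w) powr rr) \<le> 1 * ((y + (2*w+z)) powr rr - (4*w) powr rr)"
    by (rule mult_right_mono) (use m c_le1 in auto)
  moreover have "cc * ((x + (w+y+z)) powr rr - x powr rr) \<le> cc * ((w + (w+y+z)) powr rr - w powr rr)"
    using h1 c_pos by (intro mult_left_mono) auto
  moreover have "cc * (4*w) powr rr \<le> 2 * w powr rr + cc * w powr rr"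
  proof -
    have n: "(4::real) powr rr \<le> 3.0314332" by (rule pow_ub) (simp_all add: power_divide)
    have "cc * (4 powr rr - 1) \<le> 0.921600437 * (3.0314332 - 1)"
      using c_hi c_pos n by (intro mult_mono) (auto simp: rr_def intro: ge_one_powr_ge_zero)
    then have "cc * (4 powr rr - 1) * w powr rr \<le> 2 * w powr rr"
      by (intro mult_right_mono[of _ 2, simplified]) auto
    then show ?thesis using assms by (simp add: pm algebra_simps)
  qed
  ultimately have "cc * (x + (w+y+z)) powr rr \<le> cc * x powr rr + y powr rr + z powr rr"
    using h2 h3 e1 e2 e3 by (simp add: algebra_simps)
  then show ?thesis using e4 by simp
qed


lemma part4:
  fixes t w x y z :: real
  assumes "0 \<le> w" "0 \<le> x" "0 \<le> y" "0 \<le> z"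
    and zlt: "z < 1.98 * (t + w + x + y)" and tp: "0 < t"
    and tle: "t \<le> 2.072 * min (w / 1.036) (min x (min y (z / 5.884)))"
  shows "w powr rr + x powr rr + y powr rr + cc * z powr rr \<ge> (t + w + x + y + z) powr rr"
proof -
  define m where "m = min (w / 1.036) (min x (min y (z / 5.884)))"
  have m1: "m \<le> w / 1.036" and m2: "m \<le> x" and m3: "m \<le> y" and m4: "m \<le> z / 5.884" by (auto simp: m_def)
  have tm: "t \<le> 2.072 * m" using tle by (simp add: m_def)
  have tw: "t \<le> 2.072 * (w / 1.036)" by (rule order_trans[OF tm], rule mult_left_mono[OF m1]) simp
  have tx: "t \<le> 2.072 * x" by (rule order_trans[OF tm], rule mult_left_mono[OF m2]) simp
  have ty: "t \<le> 2.072 * y" by (rule order_trans[OF tm], rule mult_left_mono[OF m3]) simp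
  have tz: "t \<le> 2.072 * (z / 5.884)" by (rule order_trans[OF tm], rule mult_left_mono[OF m4]) simp
  define w0 where "w0 = 1/2 * t"
  define x0 where "x0 = 125/259 * t"
  define z0 where "z0 = 1471/518 * t"
  define S where "S = t + w + x + y"
  have w0w: "w0 \<le> w" using tw by (simp add: w0_def)
  have x0x: "x0 \<le> x" using tx by (simp add: x0_def)
  have x0y: "x0 \<le> y" using ty by (simp add: x0_def)
  have z0z: "z0 \<le> z" using tz by (simp add: z0_def)
  have pos: "0 \<le> w0" "0 \<le> x0" "0 \<le> z0" "0 \<le> S" using tp assms by (auto simp: w0_def x0_def z0_def S_def)
  have c5: "0.664 \<le> cc^5" "cc^5 \<le> 1"
  proof -
    have "(0.921600435::real)^5 \<le> cc^5" using c_lo by (intro power_mono) auto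
    then show "0.664 \<le> cc^5" by (simp add: power_divide)
    show "cc^5 \<le> 1" using c_le1 c_pos by (simp add: power_le_one)
  qed
  have c5b: "1.98 * (1 - cc^5) \<le> cc^5"
  proof -
    have "(0.921600435::real)^5 \<le> cc^5" using c_lo by (intro power_mono) auto
    then show ?thesis by (simp add: power_divide)
  qed
  have st1: "cc * z0 powr rr - 1 * (z0 + S) powr rr \<le> cc * z powr rr - 1 * (z + S) powr rr"
  proof (rule mono_G)
    fix u assume u: "z0 < u" "u < z"
    have "(1 - cc^5) * u \<le> (1 - cc^5) * (1.98 * S)"
      using u zlt c5 by (intro mult_left_mono) (auto simp: S_def)
    also have "\<dots> = (1.98 * (1 - cc^5)) * S" by simp
    also have "\<dots> \<le> cc^5 * S" using c5b pos by (intro mult_right_mono) auto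
    finally show "1 ^ 5 * u \<le> cc ^ 5 * (u + S)" by (simp add: algebra_simps)
  qed (use c_pos pos z0z in auto)
  define K1 where "K1 = z0 + t + x + y"
  have hw: "(w + K1) powr rr - w powr rr \<le> (w0 + K1) powr rr - w0 powr rr"
    by (rule incr) (use pos w0w tp assms in \<open>auto simp: K1_def\<close>)
  define K2 where "K2 = z0 + t + w0 + y"
  have hx: "(x + K2) powr rr - x powr rr \<le> (x0 + K2) powr rr - x0 powr rr"
    by (rule incr) (use pos x0x tp assms in \<open>auto simp: K2_def\<close>)
  define K3 where "K3 = z0 + t + w0 + x0"
  have hy: "(y + K3) powr rr - y powr rr \<le> (x0 + K3) powr rr - x0 powr rr"
    by (rule incr) (use pos x0y tp assms in \<open>auto simp: K3_def\<close>)
  have q1: "(z0 + S) powr rr = (w + K1) powr rr" by (simp add: S_def K1_def algebra_simps)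
  have q2: "(w0 + K1) powr rr = (x + K2) powr rr" by (simp add: K1_def K2_def algebra_simps)
  have q3: "(x0 + K2) powr rr = (y + K3) powr rr" by (simp add: K2_def K3_def algebra_simps)
  have q4: "x0 + K3 = 1374/259 * t" by (simp add: K3_def x0_def w0_def z0_def)
  have q5: "(t + w + x + y + z) powr rr = (z + S) powr rr" by (simp add: S_def algebra_simps)
  have n1: "0.5743491 \<le> (1/2::real) powr rr" by (rule pow_lb) (simp_all add: power_divide)
  have n2: "0.5583264 \<le> (125/259::real) powr rr" by (rule pow_lb) (simp_all add: power_divide)
  have n3: "2.3047633 \<le> (1471/518::real) powr rr" by (rule pow_lb) (simp_all add: power_divide)
  have n4: "(1374/259::real) powr rr \<le> 3.7997024" by (rule pow_ub) (simp_all add: power_divide)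
  have "0.921600435 * 2.3047633 \<le> cc * (1471/518::real) powr rr"
    using c_lo n3 by (intro mult_mono) auto
  then have "(1374/259::real) powr rr \<le> (1/2) powr rr + 2 * (125/259) powr rr + cc * (1471/518) powr rr"
    using n1 n2 n4 by simp
  then have "(1374/259::real) powr rr * t powr rr \<le> ((1/2) powr rr + 2 * (125/259) powr rr + cc * (1471/518) powr rr) * t powr rr"
    by (rule mult_right_mono) simp
  moreover have p1: "(1374/259*t) powr rr = (1374/259) powr rr * t powr rr" by (rule pm) (use tp in auto)
  moreover have p2: "(1/2*t) powr rr = (1/2) powr rr * t powr rr" by (rule pm) (use tp in auto)
  moreover have p3: "(125/259*t) powr rr = (125/259) powr rr * t powr rr" by (rule pm) (use tp in auto)
  moreover have p4: "(1471/518*t) powr rr = (1471/518) powr rr * t powr rr" by (rule pm) (use tp in auto)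
  ultimately have fin0: "(1374/259*t) powr rr \<le> (1/2*t) powr rr + 2 * (125/259*t) powr rr + cc * (1471/518*t) powr rr"
    by (simp only:) (simp add: algebra_simps)
  have q4': "(x0 + K3) powr rr = (1374/259*t) powr rr" using q4 by (simp only:)
  have fin: "(x0 + K3) powr rr \<le> w0 powr rr + 2 * x0 powr rr + cc * z0 powr rr"
  proof -
    have "w0 powr rr + 2 * x0 powr rr + cc * z0 powr rr = (1/2*t) powr rr + 2 * (125/259*t) powr rr + cc * (1471/518*t) powr rr"
      by (simp only: w0_def x0_def z0_def)
    then show ?thesis using fin0 q4' by linarith
  qed
  show ?thesis using st1 hw hx hy q1 q2 q3 q5 fin by simp
qed


theorem lemma2p4:
  fixes t w x y z :: nat
  shows
   "(real x \<ge> 8.956 * real z \<and> real y \<ge> 1.036 * real z \<longrightarrow>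
       real x powr rr + real y powr rr \<ge> real (x + y + z) powr rr)
  \<and> (real x \<le> 10.174 * real y \<longrightarrow>
       cc * real x powr rr + real y powr rr \<ge> real (x + y) powr rr)
  \<and> (0.5 * real y \<le> real x \<and> real x \<le> 8.884 * real y \<longrightarrow>
       real x powr rr + real y powr rr \<ge> (1 + 1 / 10.174) powr rr * real (x + y) powr rr)
  \<and> (real z < 1.98 * real (t + w + x + y) \<and> 0 < t \<and>
      real t \<le> 2.072 * min (real w / 1.036) (min (real x) (min (real y) (real z / 5.884)))
      \<longrightarrow> real w powr rr + real x powr rr + real y powr rr + cc * real z powr rr
            \<ge> real (t + w + x + y + z) powr rr)
  \<and> (w \<le> min x (min y z) \<longrightarrow>
       cc * real x powr rr + real y powr rr + real z powr rr \<ge> cc * real (w + x + y + z) powr rr)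
  \<and> (x \<ge> 6 * z \<and> y \<ge> z \<longrightarrow>
       cc * real x powr rr + real y powr rr \<ge> cc * real (x + y + z) powr rr)"
proof (intro conjI impI)
  assume "real x \<ge> 8.956 * real z \<and> real y \<ge> 1.036 * real z"
  then show "real x powr rr + real y powr rr \<ge> real (x + y + z) powr rr"
    using part1[of "real z" "real x" "real y"] by simp
next
  assume "real x \<le> 10.174 * real y"
  then show "cc * real x powr rr + real y powr rr \<ge> real (x + y) powr rr"
    using part2[of "real x" "real y"] by simp
next
  assume "0.5 * real y \<le> real x \<and> real x \<le> 8.884 * real y"
  then show "real x powr rr + real y powr rr \<ge> (1 + 1 / 10.174) powr rr * real (x + y) powr rr"
    using part3[of "real x" "real y"] by simp
next
  assume h: "real z < 1.98 * real (t + w + x + y) \<and> 0 < t \<and>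
      real t \<le> 2.072 * min (real w / 1.036) (min (real x) (min (real y) (real z / 5.884)))"
  have "real z < 1.98 * (real t + real w + real x + real y)" using h by simp
  moreover have "0 < real t" using h by simp
  ultimately have "real w powr rr + real x powr rr + real y powr rr + cc * real z powr rr
            \<ge> (real t + real w + real x + real y + real z) powr rr"
    using part4[of "real w" "real x" "real y" "real z" "real t"] h by simp
  then show "real w powr rr + real x powr rr + real y powr rr + cc * real z powr rr
            \<ge> real (t + w + x + y + z) powr rr" by simp
next
  assume "w \<le> min x (min y z)"
  then show "cc * real x powr rr + real y powr rr + real z powr rr \<ge> cc * real (w + x + y + z) powr rr"
    using part5[of "real w" "real x" "real y" "real z"] by simp
next
  assume "x \<ge> 6 * z \<and> y \<ge> z"
  then show "cc * real x powr rr + real y powr rr \<ge> cc * real (x + y + z) powr rr"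
    using part6[of "real z" "real x" "real y"] by simp
qed

end
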